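(* Let $R$ be a commutative ring with identity, let $(S,\leq)$ be a strictly ordered monoid, and let $w\in S$. Let $P_w:[[R^{S,\leq}]]\to[[R^{S,\leq}]]$ be the cut-off operator at $w$, given by $P_w(f)(s)=f(s)$ if $s<w$ and $P_w(f)(s)=0$ if $s\not<w$. Set $$A_w=\{(u,v)\in S\times S: u\not<w,\ v\not<w,\ u+v<w\},\qquad B_w=\{(u,v)\in S\times S: u<w,\ v<w,\ u+v\not<w\}.$$ Then $([[R^{S,\leq}]],P_w)$ is a Rota-Baxter algebra (of weight $-1$) if and only if $A_w=\emptyset$ and $B_w=\emptyset$.
   Context: All monoids are commutative and written additively with neutral element $0$. A partially ordered set is artinian if every strictly decreasing sequence is finite, and narrow if every subset of pairwise incomparable elements is finite. A strictly ordered monoid is a commutative monoid $S$ with a partial order $\leq$ such that $s<s'$ implies $s+t<s'+t$ for all $s,s',t\in S$. The ring of generalized power series $[[R^{S,\leq}]]$ is the set of maps $f:S\to R$ with artinian and narrow support $\{s: f(s)\neq 0\}$, with pointwise addition and convolution $(fg)(s)=\sum f(u)g(v)$ over the finitely many pairs $(u,v)$ with $u+v=s$, $f(u)\neq0$, $g(v)\neq0$. A Rota-Baxter algebra (of weight $-1$) is an associative $R$-algebra $A$ with an $R$-linear $P:A\to A$ satisfying $P(x)P(y)=P(xP(y))+P(P(x)y)-P(xy)$ for all $x,y\in A$. *)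

theory Defs
  imports Main
begin

definition strictly_ordered_monoid :: "'a::{comm_monoid_add, order} itself \<Rightarrow> bool" where
  "strictly_ordered_monoid _ \<longleftrightarrow> (\<forall>s s' t :: 'a. s < s' \<longrightarrow> s + t < s' + t)"

definition artinian :: "'a::order set \<Rightarrow> bool" where
  "artinian A \<longleftrightarrow> \<not> (\<exists>x :: nat \<Rightarrow> 'a. \<forall>n. x n \<in> A \<and> x (Suc n) < x n)"

definition narrow :: "'a::order set \<Rightarrow> bool" where
  "narrow A \<longleftrightarrow> (\<forall>B \<subseteq> A. (\<forall>x\<in>B. \<forall>y\<in>B. x \<noteq> y \<longrightarrow> \<not> x \<le> y \<and> \<not> y \<le> x) \<longrightarrow> finite B)"

definition supp :: "('a \<Rightarrow> 'r::zero) \<Rightarrow> 'a set" where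
  "supp f = {s. f s \<noteq> 0}"

text \<open>The carrier of the ring of generalized power series [[R^{S,<=}]].\<close>
definition gps :: "('a::order \<Rightarrow> 'r::zero) set" where
  "gps = {f. artinian (supp f) \<and> narrow (supp f)}"

definition conv :: "('a::comm_monoid_add \<Rightarrow> 'r::comm_ring_1) \<Rightarrow> ('a \<Rightarrow> 'r) \<Rightarrow> 'a \<Rightarrow> 'r" where
  "conv f g s = (\<Sum>(u, v) \<in> {(u, v). u + v = s \<and> f u \<noteq> 0 \<and> g v \<noteq> 0}. f u * g v)"

definition cutoff :: "'a::order \<Rightarrow> ('a \<Rightarrow> 'r::zero) \<Rightarrow> 'a \<Rightarrow> 'r" where
  "cutoff w f = (\<lambda>s. if s < w then f s else 0)"

definition rota_baxter_gps ::
  "(('a::{comm_monoid_add, order} \<Rightarrow> 'r::comm_ring_1) \<Rightarrow> ('a \<Rightarrow> 'r)) \<Rightarrow> bool" where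
  "rota_baxter_gps P \<longleftrightarrow>
     (\<forall>f \<in> gps. P f \<in> gps) \<and>
     (\<forall>f \<in> gps. \<forall>g \<in> gps. P (\<lambda>s. f s + g s) = (\<lambda>s. P f s + P g s)) \<and>
     (\<forall>c. \<forall>f \<in> gps. P (\<lambda>s. c * f s) = (\<lambda>s. c * P f s)) \<and>
     (\<forall>f \<in> gps. \<forall>g \<in> gps.
        conv (P f) (P g) =
        (\<lambda>s. P (conv f (P g)) s + P (conv (P f) g) s - P (conv f g) s))"

definition A_set :: "'a::{comm_monoid_add, order} \<Rightarrow> ('a \<times> 'a) set" where
  "A_set w = {(u, v). \<not> u < w \<and> \<not> v < w \<and> u + v < w}"

definition B_set :: "'a::{comm_monoid_add, order} \<Rightarrow> ('a \<times> 'a) set" where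
  "B_set w = {(u, v). u < w \<and> v < w \<and> \<not> u + v < w}"

end

theory Submission
  imports Defs "HOL-Library.Ramsey"
begin

lemma mono_sub:
  fixes x :: "nat \<Rightarrow> 'a::order"
  assumes art: "artinian A" and nar: "narrow A" and N: "infinite N" and x: "\<forall>n\<in>N. x n \<in> A"
  shows "\<exists>H\<subseteq>N. infinite H \<and> (\<forall>i\<in>H. \<forall>j\<in>H. i < j \<longrightarrow> x i \<le> x j)"
proof -
  define c where "c X = (let i = Min X; j = Max X in
     if x i \<le> x j then 0 else if x j < x i then 1 else (2::nat))" for X
  have c3: "c X < 3" for X unfolding c_def Let_def by (simp split: if_splits)
  have part: "\<forall>a\<in>N. \<forall>b\<in>N. a \<noteq> b \<longrightarrow> c {a,b} < 3" using c3 by blast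
  then obtain H t where H: "H \<subseteq> N" "infinite H" "t < 3"
    and Ht: "\<forall>a\<in>H. \<forall>b\<in>H. a \<noteq> b \<longrightarrow> c {a,b} = t"
    using Ramsey2[OF N part] by meson
  have key: "c {i,j} = (if x i \<le> x j then 0 else if x j < x i then 1 else 2)" if "i < j" for i j
    using that by (simp add: c_def Let_def min_def max_def)
  consider "t = 0" | "t = 1" | "t = 2" using H(3) by linarith
  then show ?thesis
  proof cases
    case 1
    have "\<forall>i\<in>H. \<forall>j\<in>H. i < j \<longrightarrow> x i \<le> x j"
    proof (intro ballI impI)
      fix i j assume "i \<in> H" "j \<in> H" "i < j"
      have ne: "i \<noteq> j" using \<open>i<j\<close> by simp
      have "c {i,j} = 0" using Ht[rule_format, OF \<open>i\<in>H\<close> \<open>j\<in>H\<close> ne] 1 by simp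
      then have "(if x i \<le> x j then 0 else if x j < x i then 1 else 2) = (0::nat)"
        using key[OF \<open>i<j\<close>] by simp
      then show "x i \<le> x j" by (simp split: if_splits)
    qed
    then show ?thesis using H by blast
  next
    case 2
    define y where "y n = x (enumerate H n)" for n
    have "\<forall>n. y n \<in> A \<and> y (Suc n) < y n"
    proof
      fix n
      have e1: "enumerate H n \<in> H" "enumerate H (Suc n) \<in> H"
        using enumerate_in_set H(2) by auto
      have lt: "enumerate H n < enumerate H (Suc n)" using enumerate_step H(2) by auto
      have ne: "enumerate H n \<noteq> enumerate H (Suc n)" using lt by simp
      have "c {enumerate H n, enumerate H (Suc n)} = 1" using Ht[rule_format, OF e1(1) e1(2) ne] 2 by simp
      then have "(if x (enumerate H n) \<le> x (enumerate H (Suc n)) then 0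
           else if x (enumerate H (Suc n)) < x (enumerate H n) then 1 else 2) = (1::nat)"
        using key[OF lt] by simp
      then have "y (Suc n) < y n" unfolding y_def by (simp split: if_splits)
      moreover have "y n \<in> A" using e1 H(1) x unfolding y_def by auto
      ultimately show "y n \<in> A \<and> y (Suc n) < y n" by simp
    qed
    then show ?thesis using art unfolding artinian_def by blast
  next
    case 3
    have col: "\<not> x i \<le> x j \<and> \<not> x j < x i" if "i \<in> H" "j \<in> H" "i < j" for i j
    proof -
      have ne: "i \<noteq> j" using \<open>i<j\<close> by simp
      have "c {i,j} = 2" using Ht[rule_format, OF that(1) that(2) ne] 3 by simp
      then have "(if x i \<le> x j then 0 else if x j < x i then 1 else 2) = (2::nat)"
        using key[OF \<open>i<j\<close>] by simp
      then show ?thesis by (simp split: if_splits)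
    qed
    have inj: "inj_on x H"
    proof (rule inj_onI)
      fix a b assume "a \<in> H" "b \<in> H" "x a = x b"
      show "a = b"
      proof (rule ccontr)
        assume "a \<noteq> b"
        then have "a < b \<or> b < a" by arith
        then show False using col \<open>a \<in> H\<close> \<open>b \<in> H\<close> \<open>x a = x b\<close> by fastforce
      qed
    qed
    have anti: "\<forall>p\<in>x ` H. \<forall>q\<in>x ` H. p \<noteq> q \<longrightarrow> \<not> p \<le> q \<and> \<not> q \<le> p"
    proof (intro ballI impI)
      fix p q assume "p \<in> x ` H" "q \<in> x ` H" "p \<noteq> q"
      then obtain a b where ab: "a \<in> H" "b \<in> H" "p = x a" "q = x b" by blast
      then have "a \<noteq> b" using \<open>p \<noteq> q\<close> by auto
      then have "a < b \<or> b < a" by arith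
      then show "\<not> p \<le> q \<and> \<not> q \<le> p"
        using col ab \<open>p \<noteq> q\<close> by (auto simp: order_le_less)
    qed
    have "x ` H \<subseteq> A" using H(1) x by auto
    then have "finite (x ` H)" using nar anti unfolding narrow_def by blast
    then have "finite H" using finite_imageD inj by blast
    then show ?thesis using H(2) by simp
  qed
qed

lemma so_strict:
  fixes a b a' b' :: "'a::{comm_monoid_add, order}"
  assumes so: "strictly_ordered_monoid TYPE('a)"
    and "a \<le> a'" "b \<le> b'" "(a, b) \<noteq> (a', b')"
  shows "a + b < a' + b'"
proof -
  have S: "\<And>s s' t :: 'a. s < s' \<Longrightarrow> s + t < s' + t" using so unfolding strictly_ordered_monoid_def by blast
  have L1: "a + b \<le> a' + b"
  proof (cases "a = a'")
    case False
    then have "a < a'" using assms(2) by simp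
    then show ?thesis using S[of a a' b] by simp
  qed simp
  have L2: "a' + b \<le> a' + b'"
  proof (cases "b = b'")
    case False
    then have "b < b'" using assms(3) by simp
    then show ?thesis using S[of b b' a'] by (simp add: add.commute)
  qed simp
  have "a \<noteq> a' \<or> b \<noteq> b'" using assms(4) by auto
  then show ?thesis
  proof
    assume "a \<noteq> a'"
    then have "a + b < a' + b" using assms(2) S[of a a' b] by simp
    then show ?thesis using L2 by simp
  next
    assume "b \<noteq> b'"
    then have "a' + b < a' + b'" using assms(3) S[of b b' a'] by (simp add: add.commute)
    then show ?thesis using L1 by simp
  qed
qed

lemma finite_T:
  fixes f :: "'a::{comm_monoid_add, order} \<Rightarrow> 'r::comm_ring_1" and g :: "'a \<Rightarrow> 'r"
  assumes so: "strictly_ordered_monoid TYPE('a)" and f: "f \<in> gps" and g: "g \<in> gps"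
  shows "finite {(u, v). u + v = s \<and> f u \<noteq> 0 \<and> g v \<noteq> 0}"
proof (rule ccontr)
  let ?T = "{(u, v). u + v = s \<and> f u \<noteq> 0 \<and> g v \<noteq> 0}"
  assume "infinite ?T"
  then obtain p :: "nat \<Rightarrow> 'a \<times> 'a" where p: "inj p" "range p \<subseteq> ?T"
    using infinite_countable_subset[OF \<open>infinite ?T\<close>] by meson
  have pT: "fst (p n) + snd (p n) = s \<and> fst (p n) \<in> supp f \<and> snd (p n) \<in> supp g" for n
  proof -
    have "p n \<in> ?T" by (rule subsetD[OF p(2) rangeI])
    then show ?thesis by (cases "p n") (auto simp: supp_def)
  qed
  have fa: "artinian (supp f)" "narrow (supp f)" using f by (simp_all add: gps_def)
  have ga: "artinian (supp g)" "narrow (supp g)" using g by (simp_all add: gps_def)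
  have x1: "\<forall>n\<in>UNIV. fst (p n) \<in> supp f" using pT by simp
  obtain H1 where H1: "H1 \<subseteq> UNIV" "infinite H1" "\<forall>i\<in>H1. \<forall>j\<in>H1. i < j \<longrightarrow> fst (p i) \<le> fst (p j)"
    using mono_sub[OF fa(1) fa(2) infinite_UNIV_nat x1] by meson
  have x2: "\<forall>n\<in>H1. snd (p n) \<in> supp g" using pT by simp
  obtain H2 where H2: "H2 \<subseteq> H1" "infinite H2" "\<forall>i\<in>H2. \<forall>j\<in>H2. i < j \<longrightarrow> snd (p i) \<le> snd (p j)"
    using mono_sub[OF ga(1) ga(2) H1(2) x2] by meson
  have "H2 \<noteq> {}" using H2(2) by auto
  then obtain i where i: "i \<in> H2" by blast
  obtain j where j: "j \<in> H2" "i < j" using H2(2) unfolding infinite_nat_iff_unbounded by blast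
  have "p i \<noteq> p j" using inj_eq[OF p(1), of i j] j(2) by simp
  have i1: "i \<in> H1" "j \<in> H1" using H2(1) i j by auto
  have le1: "fst (p i) \<le> fst (p j)" using H1(3)[rule_format, OF i1 j(2)] .
  have le2: "snd (p i) \<le> snd (p j)" using H2(3)[rule_format, OF i j] .
  have "(fst (p i), snd (p i)) \<noteq> (fst (p j), snd (p j))" using \<open>p i \<noteq> p j\<close> by simp
  then have "fst (p i) + snd (p i) < fst (p j) + snd (p j)"
    using so_strict[OF so le1 le2] by blast
  then show False using pT[of i] pT[of j] by simp
qed

lemma conv_cut:
  fixes f g F G :: "'a::comm_monoid_add \<Rightarrow> 'r::comm_ring_1"
  assumes F: "\<And>u. F u = (if Q u then f u else 0)" and G: "\<And>v. G v = (if R v then g v else 0)"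
  shows "conv F G s = (\<Sum>(u, v)\<in>{(u, v). u + v = s \<and> f u \<noteq> 0 \<and> g v \<noteq> 0 \<and> Q u \<and> R v}. f u * g v)"
  unfolding conv_def
proof (rule sum.cong)
  have "F u \<noteq> 0 \<longleftrightarrow> f u \<noteq> 0 \<and> Q u" for u unfolding F by simp
  moreover have "G v \<noteq> 0 \<longleftrightarrow> g v \<noteq> 0 \<and> R v" for v unfolding G by simp
  ultimately show "{(u, v). u + v = s \<and> F u \<noteq> 0 \<and> G v \<noteq> 0} =
    {(u, v). u + v = s \<and> f u \<noteq> 0 \<and> g v \<noteq> 0 \<and> Q u \<and> R v}"
    by blast
  fix x assume "x \<in> {(u, v). u + v = s \<and> f u \<noteq> 0 \<and> g v \<noteq> 0 \<and> Q u \<and> R v}"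
  then obtain u v where "x = (u, v)" "Q u" "R v" by blast
  then show "(case x of (u, v) \<Rightarrow> F u * G v) = (case x of (u, v) \<Rightarrow> f u * g v)"
    by (simp add: F G)
qed

lemma artinian_mono:
  assumes AB: "A \<subseteq> B" and art: "artinian B" shows "artinian A"
  unfolding artinian_def
proof
  assume "\<exists>x :: nat \<Rightarrow> _. \<forall>n. x n \<in> A \<and> x (Suc n) < x n"
  then obtain x :: "nat \<Rightarrow> _" where x: "\<forall>n. x n \<in> A \<and> x (Suc n) < x n" by blast
  then have "\<forall>n. x n \<in> B \<and> x (Suc n) < x n" using AB by auto
  then show False using art unfolding artinian_def by blast
qed

lemma narrow_mono: "A \<subseteq> B \<Longrightarrow> narrow B \<Longrightarrow> narrow A"
  unfolding narrow_def by (meson subset_trans)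

lemma finite_gps: "finite (supp f) \<Longrightarrow> f \<in> gps"
proof -
  assume fin: "finite (supp f)"
  have "artinian (supp f)"
    unfolding artinian_def
  proof
    assume "\<exists>x :: nat \<Rightarrow> _. \<forall>n. x n \<in> supp f \<and> x (Suc n) < x n"
    then obtain x :: "nat \<Rightarrow> _" where x: "\<forall>n. x n \<in> supp f \<and> x (Suc n) < x n" by blast
    have dec: "x n < x m" if "m < n" for m n
      using that
    proof (induction n)
      case 0 then show ?case by simp
    next
      case (Suc n)
      have s: "x (Suc n) < x n" using x by simp
      show ?case
      proof (cases "m = n")
        case True then show ?thesis using s by simp
      next
        case False
        then have "m < n" using Suc.prems by simp
        then have "x n < x m" by (rule Suc.IH)
        then show ?thesis using s by (rule order.strict_trans[rotated])
      qed
    qed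
    have "inj x"
    proof (rule injI)
      fix m n assume e: "x m = x n"
      show "m = n"
      proof (rule ccontr)
        assume "m \<noteq> n"
        then have "m < n \<or> n < m" by arith
        then show False using dec e by (metis less_irrefl)
      qed
    qed
    moreover have "range x \<subseteq> supp f" using x by auto
    then have "finite (range x)" using fin by (rule finite_subset)
    ultimately have "finite (UNIV :: nat set)" using finite_imageD by blast
    then show False by simp
  qed
  moreover have "narrow (supp f)" unfolding narrow_def using fin by (meson finite_subset)
  ultimately show ?thesis by (simp add: gps_def)
qed

theorem proposition3p1:
  fixes w :: "'a::{comm_monoid_add, order}"
  assumes "strictly_ordered_monoid TYPE('a)"
    and "(1::'r::comm_ring_1) \<noteq> 0"
  shows "rota_baxter_gps (cutoff w :: ('a \<Rightarrow> 'r) \<Rightarrow> 'a \<Rightarrow> 'r)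
         \<longleftrightarrow> A_set w = {} \<and> B_set w = {}"
proof
  assume rb: "rota_baxter_gps (cutoff w :: ('a \<Rightarrow> 'r) \<Rightarrow> 'a \<Rightarrow> 'r)"
  define d :: "'a \<Rightarrow> 'a \<Rightarrow> 'r" where "d u = (\<lambda>s. if s = u then 1 else 0)" for u
  have dg: "d u \<in> gps" for u
  proof (rule finite_gps)
    have "supp (d u) \<subseteq> {u}" by (auto simp: supp_def d_def)
    then show "finite (supp (d u))" by (rule finite_subset) simp
  qed
  have rb4: "\<forall>f \<in> (gps :: ('a \<Rightarrow> 'r) set). \<forall>g \<in> gps.
        conv (cutoff w f) (cutoff w g) =
        (\<lambda>s. cutoff w (conv f (cutoff w g)) s + cutoff w (conv (cutoff w f) g) s - cutoff w (conv f g) s)"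
    using rb unfolding rota_baxter_gps_def by blast
  have RB: "conv (cutoff w (d u)) (cutoff w (d v)) (u + v) =
     cutoff w (conv (d u) (cutoff w (d v))) (u + v) + cutoff w (conv (cutoff w (d u)) (d v)) (u + v)
     - cutoff w (conv (d u) (d v)) (u + v)" for u v
    using fun_cong[OF rb4[rule_format, OF dg[of u] dg[of v]], of "u + v"] by simp
  have dd: "conv (d u) (d v) (u + v) = 1" for u v
  proof -
    have "{(a, b). a + b = u + v \<and> d u a \<noteq> 0 \<and> d v b \<noteq> 0} = {(u, v)}"
      using assms(2) by (auto simp: d_def split: if_splits)
    then show ?thesis unfolding conv_def by (simp add: d_def)
  qed
  have c0: "cutoff w (d u) = (\<lambda>_. 0)" if "\<not> u < w" for u
    using that by (auto simp: cutoff_def d_def)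
  have c1: "cutoff w (d u) = d u" if "u < w" for u
    using that by (auto simp: cutoff_def d_def)
  have z1: "conv (\<lambda>_. 0) h s = 0" for h :: "'a \<Rightarrow> 'r" and s by (simp add: conv_def)
  have z2: "conv h (\<lambda>_. 0) s = 0" for h :: "'a \<Rightarrow> 'r" and s by (simp add: conv_def)
  have z3: "cutoff w (\<lambda>_. 0 :: 'r) s = 0" for s by (simp add: cutoff_def)
  show "A_set w = {} \<and> B_set w = {}"
  proof
    show "A_set w = {}"
    proof (rule ccontr)
      assume "A_set w \<noteq> {}"
      then obtain u v where uv: "\<not> u < w" "\<not> v < w" "u + v < w" by (auto simp: A_set_def)
      have e: "cutoff w (conv (d u) (d v)) (u + v) = 1" using uv dd by (simp add: cutoff_def)
      have "(0::'r) = 0 + 0 - 1"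
        using RB[of u v] unfolding e c0[OF uv(1)] c0[OF uv(2)] z1 z2 z3 by simp
      then show False using assms(2) by simp
    qed
  next
    show "B_set w = {}"
    proof (rule ccontr)
      assume "B_set w \<noteq> {}"
      then obtain u v where uv: "u < w" "v < w" "\<not> u + v < w" by (auto simp: B_set_def)
      have e: "cutoff w h (u + v) = 0" for h :: "'a \<Rightarrow> 'r" using uv by (simp add: cutoff_def)
      have "(1::'r) = 0"
        using RB[of u v] unfolding e c1[OF uv(1)] c1[OF uv(2)] dd by simp
      then show False using assms(2) by simp
    qed
  qed
next
  assume AB: "A_set w = {} \<and> B_set w = {}"
  let ?P = "cutoff w :: ('a \<Rightarrow> 'r) \<Rightarrow> 'a \<Rightarrow> 'r"
  have cl: "\<forall>f \<in> gps. ?P f \<in> gps"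
  proof
    fix f :: "'a \<Rightarrow> 'r" assume "f \<in> gps"
    moreover have "supp (?P f) \<subseteq> supp f" by (auto simp: supp_def cutoff_def)
    ultimately show "?P f \<in> gps" unfolding gps_def using artinian_mono narrow_mono by blast
  qed
  have rbid: "conv (?P f) (?P g) s =
        ?P (conv f (?P g)) s + ?P (conv (?P f) g) s - ?P (conv f g) s"
    if f: "f \<in> gps" and g: "g \<in> gps" for f g s
  proof -
    let ?h = "\<lambda>(u, v). f u * g v"
    let ?T = "{(u, v). u + v = s \<and> f u \<noteq> 0 \<and> g v \<noteq> 0 \<and> True \<and> True}"
    let ?T11 = "{(u, v). u + v = s \<and> f u \<noteq> 0 \<and> g v \<noteq> 0 \<and> u < w \<and> v < w}"
    let ?T01 = "{(u, v). u + v = s \<and> f u \<noteq> 0 \<and> g v \<noteq> 0 \<and> True \<and> v < w}"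
    let ?T10 = "{(u, v). u + v = s \<and> f u \<noteq> 0 \<and> g v \<noteq> 0 \<and> u < w \<and> True}"
    have e11: "conv (?P f) (?P g) s = sum ?h ?T11"
      by (rule conv_cut) (auto simp: cutoff_def)
    have e01: "conv f (?P g) s = sum ?h ?T01"
      by (rule conv_cut) (auto simp: cutoff_def)
    have e10: "conv (?P f) g s = sum ?h ?T10"
      by (rule conv_cut) (auto simp: cutoff_def)
    have e00: "conv f g s = sum ?h ?T"
      by (rule conv_cut) auto
    have finT: "finite ?T" using finite_T[OF assms(1) f g, of s] by simp
    show ?thesis
    proof (cases "s < w")
      case True
      have un: "?T01 \<union> ?T10 = ?T" using AB True by (auto simp: A_set_def)
      have it: "?T01 \<inter> ?T10 = ?T11" by auto
      have "sum ?h (?T01 \<union> ?T10) + sum ?h (?T01 \<inter> ?T10) = sum ?h ?T01 + sum ?h ?T10"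
        by (rule sum.union_inter) (auto intro: finite_subset[OF _ finT])
      then have "sum ?h ?T11 = sum ?h ?T01 + sum ?h ?T10 - sum ?h ?T"
        unfolding un it by (simp add: algebra_simps)
      then show ?thesis using True e11 e01 e10 e00 by (simp add: cutoff_def)
    next
      case False
      have em: "?T11 = {}" using AB False by (auto simp: B_set_def)
      have z: "conv (?P f) (?P g) s = 0" unfolding e11 em by simp
      show ?thesis using False z by (simp add: cutoff_def)
    qed
  qed
  have lin1: "\<forall>f \<in> gps. \<forall>g \<in> gps. ?P (\<lambda>s. f s + g s) = (\<lambda>s. ?P f s + ?P g s)"
    by (simp add: cutoff_def fun_eq_iff)
  have lin2: "\<forall>c. \<forall>f \<in> gps. ?P (\<lambda>s. c * f s) = (\<lambda>s. c * ?P f s)"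
    by (simp add: cutoff_def fun_eq_iff)
  have rb4: "\<forall>f \<in> gps. \<forall>g \<in> gps.
        conv (?P f) (?P g) =
        (\<lambda>s. ?P (conv f (?P g)) s + ?P (conv (?P f) g) s - ?P (conv f g) s)"
    using rbid by (intro ballI ext) assumption
  show "rota_baxter_gps ?P"
    unfolding rota_baxter_gps_def using cl lin1 lin2 rb4 by (intro conjI)
qed

end
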